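(* For any $\varepsilon\in(0,1]$ and $D\in\mathbb{N}$ there exists a constant $c>0$ such that $|[M]_\varepsilon|\le c|M|$ for every $n\in\mathbb{N}$ and every $M\subseteq[n]^D$.
   Context: $\mathcal{L}$ is the set of all axis-parallel lines in $[n]^D$, i.e. sets $A_1\times\cdots\times A_D$ with $A_i=[n]$ for one $i$ and $|A_j|=1$ for all $j\ne i$. The $\varepsilon$-closure $[M]_\varepsilon$ of $M\subseteq[n]^D$ is the minimum set containing $M$ such that for every line $\ell\in\mathcal{L}$ either $\ell\subseteq[M]_\varepsilon$ or $|\ell\cap[M]_\varepsilon|<\varepsilon n$. *)

theory Defs
  imports Complex_Main
begin

definition grid :: "nat \<Rightarrow> nat \<Rightarrow> nat list set" where
  "grid n D = {xs. length xs = D \<and> set xs \<subseteq> {1..n}}"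

definition lines :: "nat \<Rightarrow> nat \<Rightarrow> nat list set set" where
  "lines n D = {{x[i := t] | t. t \<in> {1..n}} | x i. x \<in> grid n D \<and> i < D}"

definition eps_closed :: "real \<Rightarrow> nat \<Rightarrow> nat \<Rightarrow> nat list set \<Rightarrow> bool" where
  "eps_closed \<epsilon> n D S \<longleftrightarrow>
     (\<forall>L \<in> lines n D. L \<subseteq> S \<or> real (card (L \<inter> S)) < \<epsilon> * real n)"

definition eps_closure :: "real \<Rightarrow> nat \<Rightarrow> nat \<Rightarrow> nat list set \<Rightarrow> nat list set" where
  "eps_closure \<epsilon> n D M = \<Inter> {S. M \<subseteq> S \<and> eps_closed \<epsilon> n D S}"

end

theory Submission
  imports Defs "HOL-Library.FuncSet"
begin

definition flat :: "nat set \<Rightarrow> nat list \<Rightarrow> nat list set" where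
  "flat J y = {z. length z = length y \<and> (\<forall>j<length y. j \<notin> J \<longrightarrow> z!j = y!j)}"

lemma flat_sym: "z \<in> flat J y \<longleftrightarrow> y \<in> flat J z"
  unfolding flat_def by auto

lemma flat_eq: "z \<in> flat J y \<Longrightarrow> flat J z = flat J y"
  unfolding flat_def by auto

lemma finite_grid: "finite (grid n D)"
proof -
  have "grid n D = {xs. set xs \<subseteq> {1..n} \<and> length xs = D}" unfolding grid_def by auto
  then show ?thesis using finite_lists_length_eq[of "{1..n}" D] by simp
qed

lemma card_flat_grid:
  assumes "J \<subseteq> {..<D}" "length m = D"
  shows "card (flat J m \<inter> grid n D) \<le> n ^ card J"
proof -
  have fJ: "finite J" using assms(1) finite_subset by blast
  let ?f = "\<lambda>y. restrict (\<lambda>i. y!i) J"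
  have inj: "inj_on ?f (flat J m \<inter> grid n D)"
  proof (rule inj_onI)
    fix y z assume y: "y \<in> flat J m \<inter> grid n D" and z: "z \<in> flat J m \<inter> grid n D" and e: "?f y = ?f z"
    have ly: "length y = D" and lz: "length z = D" using y z assms unfolding flat_def by auto
    show "y = z"
    proof (rule nth_equalityI)
      show "length y = length z" using ly lz by simp
      fix i assume "i < length y"
      then show "y!i = z!i"
      proof (cases "i \<in> J")
        case True then show ?thesis using e by (metis restrict_apply')
      next
        case False then show ?thesis using y z assms \<open>i < length y\<close> ly unfolding flat_def by auto
      qed
    qed
  qed
  have sub: "?f ` (flat J m \<inter> grid n D) \<subseteq> (\<Pi>\<^sub>E i\<in>J. {1..n})"
  proof
    fix w assume "w \<in> ?f ` (flat J m \<inter> grid n D)"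
    then obtain y where y: "y \<in> grid n D" "y \<in> flat J m" and w: "w = ?f y" by auto
    have "\<forall>i\<in>J. y!i \<in> {1..n}"
    proof
      fix i assume "i \<in> J"
      then have "i < length y" using y assms unfolding grid_def by auto
      then have "y!i \<in> set y" by (rule nth_mem)
      then show "y!i \<in> {1..n}" using y unfolding grid_def by auto
    qed
    then show "w \<in> (\<Pi>\<^sub>E i\<in>J. {1..n})" using w by auto
  qed
  have "card (flat J m \<inter> grid n D) = card (?f ` (flat J m \<inter> grid n D))"
    using inj card_image by metis
  also have "\<dots> \<le> card (\<Pi>\<^sub>E i\<in>J. {1..n::nat})"
    by (rule card_mono[OF _ sub]) (simp add: fJ finite_PiE)
  also have "\<dots> = n ^ card J" by (simp add: card_PiE[OF fJ])
  finally show ?thesis .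
qed

definition Sset :: "real \<Rightarrow> nat \<Rightarrow> nat \<Rightarrow> nat list set \<Rightarrow> nat list set" where
  "Sset a n D M = {y \<in> grid n D. \<exists>J. J \<subseteq> {..<D} \<and> a ^ card J \<le> real (card (M \<inter> flat J y))}"

lemma upd_in_flat:
  assumes "length x = D" "i \<in> J"
  shows "x[i := t] \<in> flat J (x[i := s])"
  unfolding flat_def using assms(2) by (auto, metis nth_list_update_neq)

lemma upd_disj:
  assumes "length x = D" "i < D" "i \<notin> J" "t \<noteq> s"
  shows "flat J (x[i := t]) \<inter> flat J (x[i := s]) = {}"
  using assms unfolding flat_def by (auto simp: nth_list_update)

lemma upd_grid:
  assumes "x \<in> grid n D" "t \<in> {1..n}"
  shows "x[i := t] \<in> grid n D"
  using assms set_update_subset_insert[of x i t] unfolding grid_def by auto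

lemma closed_S:
  assumes apos: "0 < a" and MG: "M \<subseteq> grid n D" and aeps: "2 ^ D * a \<le> \<epsilon> * real n"
  shows "eps_closed \<epsilon> n D (Sset a n D M)"
  unfolding eps_closed_def
proof
  fix L assume "L \<in> lines n D"
  then obtain x i where L: "L = {x[i := t] | t. t \<in> {1..n}}" and xg: "x \<in> grid n D" and iD: "i < D"
    unfolding lines_def by blast
  define S where "S = Sset a n D M"
  have finM: "finite M" using MG finite_grid finite_subset by blast
  have lx: "length x = D" using xg unfolding grid_def by auto
  have Lg: "L \<subseteq> grid n D" using L xg upd_grid by blast
  have finL: "finite L" using Lg finite_grid finite_subset by blast
  have LinS: "L \<subseteq> S" if "y \<in> L" "J \<subseteq> {..<D}" "i \<in> J" "a ^ card J \<le> real (card (M \<inter> flat J y))" for y J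
  proof
    fix q assume "q \<in> L"
    then obtain t where q: "q = x[i := t]" "t \<in> {1..n}" using L by blast
    obtain s where s: "y = x[i := s]" using \<open>y \<in> L\<close> L by blast
    have "q \<in> flat J y" using q s upd_in_flat[OF lx \<open>i \<in> J\<close>] by simp
    then have "flat J q = flat J y" by (rule flat_eq)
    then show "q \<in> S" using that \<open>q \<in> L\<close> Lg unfolding S_def Sset_def by auto
  qed
  show "L \<subseteq> S \<or> real (card (L \<inter> S)) < \<epsilon> * real n"
  proof (cases "L \<subseteq> S")
    case True then show ?thesis by simp
  next
    case notsub: False
    let ?I = "Pow ({..<D} - {i})"
    let ?P = "\<lambda>J. {p \<in> L. a ^ card J \<le> real (card (M \<inter> flat J p))}"
    have each: "real (card (?P J)) < a" if "J \<in> ?I" for J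
    proof (rule ccontr)
      assume "\<not> real (card (?P J)) < a"
      then have aP: "a \<le> real (card (?P J))" by simp
      have JD: "J \<subseteq> {..<D}" "i \<notin> J" using that by auto
      have finJ: "finite J" using JD finite_subset by blast
      have disj: "\<forall>p\<in>?P J. \<forall>q\<in>?P J. p \<noteq> q \<longrightarrow> (M \<inter> flat J p) \<inter> (M \<inter> flat J q) = {}"
      proof (intro ballI impI)
        fix p q assume "p \<in> ?P J" "q \<in> ?P J" "p \<noteq> q"
        then obtain t s where "p = x[i := t]" "q = x[i := s]" using L by blast
        with \<open>p \<noteq> q\<close> have "t \<noteq> s" by auto
        then show "(M \<inter> flat J p) \<inter> (M \<inter> flat J q) = {}"
          using upd_disj[OF lx iD JD(2), of t s] \<open>p = x[i := t]\<close> \<open>q = x[i := s]\<close> by auto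
      qed
      have sub: "(\<Union>p\<in>?P J. M \<inter> flat J p) \<subseteq> M \<inter> flat (insert i J) x"
      proof
        fix z assume "z \<in> (\<Union>p\<in>?P J. M \<inter> flat J p)"
        then obtain p where p: "p \<in> L" "z \<in> M" "z \<in> flat J p" by auto
        then obtain t where "p = x[i := t]" using L by blast
        then show "z \<in> M \<inter> flat (insert i J) x"
          using p lx unfolding flat_def by (auto simp: nth_list_update)
      qed
      have finP: "finite (?P J)" using finL by simp
      have "real (card (?P J)) * a ^ card J \<le> (\<Sum>p\<in>?P J. real (card (M \<inter> flat J p)))"
        using sum_bounded_below[of "?P J" "a ^ card J" "\<lambda>p. real (card (M \<inter> flat J p))"] by auto
      also have "\<dots> = real (card (\<Union>p\<in>?P J. M \<inter> flat J p))"
        using card_UN_disjoint[OF finP _ disj] finM by simp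
      also have "\<dots> \<le> real (card (M \<inter> flat (insert i J) x))"
        using card_mono[OF _ sub] finM by simp
      finally have h: "real (card (?P J)) * a ^ card J \<le> real (card (M \<inter> flat (insert i J) x))" .
      have "a ^ card (insert i J) = a * a ^ card J" using finJ JD by simp
      also have "\<dots> \<le> real (card (?P J)) * a ^ card J"
        using aP apos by (simp add: mult_right_mono)
      finally have hx: "a ^ card (insert i J) \<le> real (card (M \<inter> flat (insert i J) x))" using h by linarith
      have xL: "x \<in> L"
      proof -
        have "x!i \<in> set x" using iD lx by simp
        then have "x!i \<in> {1..n}" using xg unfolding grid_def by auto
        moreover have "x = x[i := x!i]" by simp
        ultimately show ?thesis using L by blast
      qed
      have "L \<subseteq> S" using LinS[OF xL _ _ hx] JD iD by auto
      then show False using notsub by simp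
    qed
    have cover: "L \<inter> S \<subseteq> (\<Union>J\<in>?I. ?P J)"
    proof
      fix p assume p: "p \<in> L \<inter> S"
      then obtain J where J: "J \<subseteq> {..<D}" "a ^ card J \<le> real (card (M \<inter> flat J p))"
        unfolding S_def Sset_def by auto
      have "i \<notin> J" using LinS[of p J] J p notsub by auto
      then show "p \<in> (\<Union>J\<in>?I. ?P J)" using J p by auto
    qed
    have finI: "finite ?I" by simp
    have "card (L \<inter> S) \<le> card (\<Union>J\<in>?I. ?P J)"
      by (rule card_mono[OF _ cover]) (use finL in auto)
    also have "\<dots> \<le> (\<Sum>J\<in>?I. card (?P J))" by (rule card_UN_le[OF finI])
    finally have "real (card (L \<inter> S)) \<le> real (\<Sum>J\<in>?I. card (?P J))"
      by (simp only: of_nat_le_iff)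
    also have "\<dots> = (\<Sum>J\<in>?I. real (card (?P J)))" by (rule of_nat_sum)
    also have "\<dots> < real (card ?I) * a"
      by (rule sum_bounded_above_strict) (use each in \<open>auto simp: card_Pow\<close>)
    also have "real (card ?I) = 2 ^ (D - 1)"
      using iD by (simp add: card_Pow)
    also have "2 ^ (D - 1) * a \<le> 2 ^ D * a"
      using apos by (intro mult_right_mono) (auto simp: power_increasing)
    finally show ?thesis using aeps unfolding S_def by simp
  qed
qed

lemma card_H:
  assumes apos: "0 < a" and MG: "M \<subseteq> grid n D" and JD: "J \<subseteq> {..<D}"
  shows "real (card {y \<in> grid n D. a ^ card J \<le> real (card (M \<inter> flat J y))}) * a ^ card J
         \<le> real (card M) * real n ^ card J"
proof -
  let ?H = "{y \<in> grid n D. a ^ card J \<le> real (card (M \<inter> flat J y))}"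
  have finM: "finite M" using MG finite_grid finite_subset by blast
  have finH: "finite ?H" using finite_grid by simp
  have first: "real (card ?H) * a ^ card J \<le> (\<Sum>y\<in>?H. real (card (M \<inter> flat J y)))"
    using sum_bounded_below[of ?H "a ^ card J" "\<lambda>y. real (card (M \<inter> flat J y))"] by auto
  have "(\<Sum>y\<in>?H. card (M \<inter> flat J y)) = (\<Sum>y\<in>?H. \<Sum>m\<in>M. if m \<in> flat J y then 1 else 0)"
  proof (rule sum.cong[OF refl])
    fix y
    have "M \<inter> flat J y = {m \<in> M. m \<in> flat J y}" by auto
    then show "card (M \<inter> flat J y) = (\<Sum>m\<in>M. if m \<in> flat J y then 1 else 0)"
      using finM by (simp add: sum.If_cases)
  qed
  also have "\<dots> = (\<Sum>m\<in>M. \<Sum>y\<in>?H. if m \<in> flat J y then 1 else 0)" by (rule sum.swap)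
  also have "\<dots> = (\<Sum>m\<in>M. card {y \<in> ?H. y \<in> flat J m})"
  proof (rule sum.cong[OF refl])
    fix m
    have "{y \<in> ?H. y \<in> flat J m} = ?H \<inter> {y. m \<in> flat J y}" using flat_sym by blast
    then show "(\<Sum>y\<in>?H. if m \<in> flat J y then 1 else 0) = card {y \<in> ?H. y \<in> flat J m}"
      using finH by (simp add: sum.If_cases)
  qed
  also have "\<dots> \<le> (\<Sum>m\<in>M. n ^ card J)"
  proof (rule sum_mono)
    fix m assume "m \<in> M"
    then have lm: "length m = D" using MG unfolding grid_def by auto
    have "card {y \<in> ?H. y \<in> flat J m} \<le> card (flat J m \<inter> grid n D)"
      by (rule card_mono) (use finite_grid in auto)
    also have "\<dots> \<le> n ^ card J" by (rule card_flat_grid[OF JD lm])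
    finally show "card {y \<in> ?H. y \<in> flat J m} \<le> n ^ card J" .
  qed
  also have "\<dots> = card M * n ^ card J" by simp
  finally have "(\<Sum>y\<in>?H. card (M \<inter> flat J y)) \<le> card M * n ^ card J" .
  then have "real (\<Sum>y\<in>?H. card (M \<inter> flat J y)) \<le> real (card M * n ^ card J)"
    by (simp only: of_nat_le_iff)
  then have "(\<Sum>y\<in>?H. real (card (M \<inter> flat J y))) \<le> real (card M) * real n ^ card J"
    by (simp only: of_nat_sum of_nat_mult of_nat_power)
  with first show ?thesis by linarith
qed

lemma card_S:
  assumes apos: "0 < a" and MG: "M \<subseteq> grid n D" and B: "real n / a \<le> B" "1 \<le> B"
  shows "real (card (Sset a n D M)) \<le> 2 ^ D * B ^ D * real (card M)"
proof -
  let ?I = "Pow {..<D::nat}"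
  let ?H = "\<lambda>J. {y \<in> grid n D. a ^ card J \<le> real (card (M \<inter> flat J y))}"
  have "Sset a n D M \<subseteq> (\<Union>J\<in>?I. ?H J)" unfolding Sset_def by auto
  then have "card (Sset a n D M) \<le> card (\<Union>J\<in>?I. ?H J)"
    by (rule card_mono[rotated]) (use finite_grid in auto)
  also have "\<dots> \<le> (\<Sum>J\<in>?I. card (?H J))" by (rule card_UN_le) simp
  finally have "real (card (Sset a n D M)) \<le> real (\<Sum>J\<in>?I. card (?H J))"
    by (simp only: of_nat_le_iff)
  also have "\<dots> = (\<Sum>J\<in>?I. real (card (?H J)))" by (rule of_nat_sum)
  also have "\<dots> \<le> (\<Sum>J\<in>?I. B ^ D * real (card M))"
  proof (rule sum_mono)
    fix J assume J: "J \<in> ?I"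
    then have JD: "J \<subseteq> {..<D}" by auto
    have cJ: "card J \<le> D" using card_mono[OF _ JD] by simp
    have ak: "0 < a ^ card J" using apos by simp
    have "real (card (?H J)) * a ^ card J \<le> real (card M) * real n ^ card J"
      by (rule card_H[OF apos MG JD])
    then have "real (card (?H J)) \<le> real (card M) * real n ^ card J / a ^ card J"
      using ak by (simp add: pos_le_divide_eq)
    also have "\<dots> = real (card M) * (real n / a) ^ card J" by (simp add: power_divide)
    also have "\<dots> \<le> real (card M) * B ^ card J"
      using B apos by (intro mult_left_mono power_mono) auto
    also have "\<dots> \<le> real (card M) * B ^ D"
      using B cJ by (intro mult_left_mono power_increasing) auto
    finally show "real (card (?H J)) \<le> B ^ D * real (card M)" by (simp only: mult.commute)
  qed
  also have "\<dots> = 2 ^ D * B ^ D * real (card M)" by (simp add: card_Pow)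
  finally show ?thesis .
qed

theorem lemma8:
  fixes \<epsilon> :: real and D :: nat
  assumes "0 < \<epsilon>" and "\<epsilon> \<le> 1"
  shows "\<exists>c > 0. \<forall>(n::nat) M. M \<subseteq> grid n D \<longrightarrow>
           real (card (eps_closure \<epsilon> n D M)) \<le> c * real (card M)"
proof -
  define B where "B = 2 ^ D / \<epsilon>"
  have B1: "1 \<le> B" using assms unfolding B_def
    by (simp add: le_divide_eq) (meson dual_order.trans one_le_power order.refl one_le_numeral)
  define c where "c = 2 ^ D * B ^ D"
  have c1: "1 \<le> c"
  proof -
    have "(1::real) = 1 * 1" by simp
    also have "\<dots> \<le> 2 ^ D * B ^ D" using B1 by (intro mult_mono one_le_power) auto
    finally show ?thesis unfolding c_def .
  qed
  show ?thesis
  proof (intro exI[of _ c] conjI allI impI)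
    show "0 < c" using c1 by simp
    fix n M assume MG: "M \<subseteq> grid n D"
    have finM: "finite M" using MG finite_grid finite_subset by blast
    show "real (card (eps_closure \<epsilon> n D M)) \<le> c * real (card M)"
    proof (cases "n = 0")
      case True
      have "lines n D = {}" using True unfolding lines_def grid_def
        by auto
      then have "eps_closed \<epsilon> n D M" unfolding eps_closed_def by simp
      then have "eps_closure \<epsilon> n D M \<subseteq> M" unfolding eps_closure_def by blast
      then have "card (eps_closure \<epsilon> n D M) \<le> card M" using finM card_mono by blast
      then have r: "real (card (eps_closure \<epsilon> n D M)) \<le> real (card M)" by (simp only: of_nat_le_iff)
      have "1 * real (card M) \<le> c * real (card M)" using c1 by (intro mult_right_mono) auto
      then show ?thesis using r by simp
    next
      case False
      define a where "a = \<epsilon> * real n / 2 ^ D"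
      have apos: "0 < a" using False assms unfolding a_def by simp
      have aeps: "2 ^ D * a \<le> \<epsilon> * real n" unfolding a_def by simp
      have na: "real n / a \<le> B" unfolding a_def B_def using False assms by (simp add: field_simps)
      have cl: "eps_closed \<epsilon> n D (Sset a n D M)" by (rule closed_S[OF apos MG aeps])
      have MS: "M \<subseteq> Sset a n D M"
      proof
        fix m assume "m \<in> M"
        then have "M \<inter> flat {} m = {m}" unfolding flat_def using MG
          by (auto intro: nth_equalityI)
        then show "m \<in> Sset a n D M" using \<open>m \<in> M\<close> MG unfolding Sset_def
          by (auto intro!: exI[of _ "{}"])
      qed
      have "eps_closure \<epsilon> n D M \<subseteq> Sset a n D M" unfolding eps_closure_def using cl MS by blast
      then have "card (eps_closure \<epsilon> n D M) \<le> card (Sset a n D M)"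
        by (rule card_mono[rotated]) (auto simp: Sset_def finite_grid)
      then have "real (card (eps_closure \<epsilon> n D M)) \<le> real (card (Sset a n D M))" by simp
      also have "\<dots> \<le> c * real (card M)" unfolding c_def by (rule card_S[OF apos MG na B1])
      finally show ?thesis .
    qed
  qed
qed

end
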